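(* Let $u:\mathbb{R}_{\ge 0}\to[0,1]$ be non-increasing with $u(0)=1$ and $\lim_{t\to\infty}u(t)=0$; let there be $n$ algorithms with runtime distributions $\mathcal{D}_i$, CDFs $F_i$, expected utilities $U_i=\mathbb{E}_{t\sim\mathcal{D}_i}[u(t)]$; let $i^{opt}\in\arg\max_iU_i$ and $\Delta_i=U_{i^{opt}}-U_i$; let $\delta\in(0,1)$. Consider the Utilitarian Procrastination (UP) procedure described below. With probability at least $1-\delta$ the following all hold: (1) UP eventually returns the optimal algorithm; (2) if UP returns at the end of a round $m$ in which the current captime $\kappa_{i^{opt}}$ of $i^{opt}$ satisfies $$2\sqrt{\frac{\ln\big(11nm^2(\log\kappa_{i^{opt}}+1)^2/\delta\big)}{2m}}+u(\kappa_{i^{opt}})\big(1-F_{i^{opt}}(\kappa_{i^{opt}})\big)\le\epsilon,$$ then the returned algorithm is $\epsilon$-optimal; (3) for any suboptimal algorithm $i$, if in some round $m$ the current captimes $\kappa_i,\kappa_{i^{opt}}$ satisfy $$2\sqrt{\frac{\ln(11nm^2(\log\kappa_i+1)^2/\delta)}{2m}}+2\sqrt{\frac{\ln(11nm^2(\log\kappa_{i^{opt}}+1)^2/\delta)}{2m}}+u(\kappa_i)\big(1-F_i(\kappa_i)\big)+u(\kappa_{i^{opt}})\big(1-F_{i^{opt}}(\kappa_{i^{opt}})\big)\le\Delta_i,$$ then $i$ is eliminated.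
   Context: Runs of algorithm $i$ at captime $\kappa$ yield independent samples $\min(t,\kappa)$ with $t\sim\mathcal{D}_i$ ($\mathcal{D}_i$ induced by instances drawn i.i.d. from an instance distribution). An algorithm $j$ is $\epsilon$-optimal if $U_j\ge\max_iU_i-\epsilon$. UP procedure: initialize the candidate set $I=\{1,\dots,n\}$ and $\kappa_i=1$ for all $i$. For rounds $m=1,2,3,\dots$: for each $i\in I$, run $i$ on $m$ instances with captime $\kappa_i$, obtaining $t_{i1}(\kappa_i),\dots,t_{im}(\kappa_i)$; let $\widehat{F}_{im}(\kappa_i)=|\{j: t_{ij}(\kappa_i)<\kappa_i\}|/m$, $\widehat{U}_{im}(\kappa_i)=\frac1m\sum_{j=1}^mu(t_{ij}(\kappa_i))$, $\alpha_{im}=\sqrt{\ln(11nm^2(\log\kappa_i+1)^2/\delta)/(2m)}$, $UCB_{im}=\widehat{U}_{im}(\kappa_i)+(1-u(\kappa_i))\alpha_{im}$, $LCB_{im}=\widehat{U}_{im}(\kappa_i)-\alpha_{im}-u(\kappa_i)(1-\widehat{F}_{im}(\kappa_i))$. Then let $i^*\in\arg\max_{i\in I}LCB_{im}$. For each $i\in I$: if $UCB_{im}<LCB_{i^*m}$, remove $i$ from $I$ ("eliminate" $i$); if $2\alpha_{im}\le u(\kappa_i)(1-\widehat{F}_{im}(\kappa_i))$, set $\kappa_i\leftarrow2\kappa_i$. If $|I|=1$ or execution is interrupted, return $i^*$. *)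

theory Defs
  imports "HOL-Probability.Probability"
begin

text \<open>Algorithms are indexed 0..n-1.  s i m j is the (uncapped) runtime observed for
  algorithm i on the j-th instance (j < m) of round m; the capped observation at
  captime k is min (s i m j) k.  sel is the (arbitrary) tie-breaking rule choosing
  an element of argmax of LCB in round m.\<close>

definition up_alpha :: "nat \<Rightarrow> real \<Rightarrow> nat \<Rightarrow> real \<Rightarrow> real" where
  "up_alpha n \<delta> m k =
     sqrt (ln (11 * real n * real m ^ 2 * (log 2 k + 1) ^ 2 / \<delta>) / (2 * real m))"

definition up_Fhat :: "(nat \<Rightarrow> nat \<Rightarrow> nat \<Rightarrow> real) \<Rightarrow> nat \<Rightarrow> nat \<Rightarrow> real \<Rightarrow> real" where
  "up_Fhat s i m k = real (card {j. j < m \<and> min (s i m j) k < k}) / real m"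

definition up_Uhat :: "(real \<Rightarrow> real) \<Rightarrow> (nat \<Rightarrow> nat \<Rightarrow> nat \<Rightarrow> real) \<Rightarrow> nat \<Rightarrow> nat \<Rightarrow> real \<Rightarrow> real" where
  "up_Uhat u s i m k = (\<Sum>j<m. u (min (s i m j) k)) / real m"

definition up_UCB :: "nat \<Rightarrow> real \<Rightarrow> (real \<Rightarrow> real) \<Rightarrow> (nat \<Rightarrow> nat \<Rightarrow> nat \<Rightarrow> real)
    \<Rightarrow> nat \<Rightarrow> nat \<Rightarrow> real \<Rightarrow> real" where
  "up_UCB n \<delta> u s i m k = up_Uhat u s i m k + (1 - u k) * up_alpha n \<delta> m k"

definition up_LCB :: "nat \<Rightarrow> real \<Rightarrow> (real \<Rightarrow> real) \<Rightarrow> (nat \<Rightarrow> nat \<Rightarrow> nat \<Rightarrow> real)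
    \<Rightarrow> nat \<Rightarrow> nat \<Rightarrow> real \<Rightarrow> real" where
  "up_LCB n \<delta> u s i m k =
     up_Uhat u s i m k - up_alpha n \<delta> m k - u k * (1 - up_Fhat s i m k)"

text \<open>A state is the candidate set together with the current captimes.\<close>
type_synonym up_st = "nat set \<times> (nat \<Rightarrow> real)"

definition up_istar :: "nat \<Rightarrow> real \<Rightarrow> (real \<Rightarrow> real) \<Rightarrow> (nat \<Rightarrow> nat set \<Rightarrow> (nat \<Rightarrow> real) \<Rightarrow> nat)
    \<Rightarrow> (nat \<Rightarrow> nat \<Rightarrow> nat \<Rightarrow> real) \<Rightarrow> nat \<Rightarrow> up_st \<Rightarrow> nat" where
  "up_istar n \<delta> u sel s m st = sel m (fst st) (\<lambda>i. up_LCB n \<delta> u s i m (snd st i))"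

definition up_round :: "nat \<Rightarrow> real \<Rightarrow> (real \<Rightarrow> real) \<Rightarrow> (nat \<Rightarrow> nat set \<Rightarrow> (nat \<Rightarrow> real) \<Rightarrow> nat)
    \<Rightarrow> (nat \<Rightarrow> nat \<Rightarrow> nat \<Rightarrow> real) \<Rightarrow> nat \<Rightarrow> up_st \<Rightarrow> up_st" where
  "up_round n \<delta> u sel s m st =
     (let I = fst st; k = snd st; c = up_LCB n \<delta> u s (up_istar n \<delta> u sel s m st) m
             (k (up_istar n \<delta> u sel s m st))
      in ({i \<in> I. \<not> up_UCB n \<delta> u s i m (k i) < c},
          \<lambda>i. if i \<in> I \<and> 2 * up_alpha n \<delta> m (k i) \<le> u (k i) * (1 - up_Fhat s i m (k i))
              then 2 * k i else k i))"

text \<open>up_state ... m is the state after round m (m = 0: initial state).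
  Round m (m \<ge> 1) uses up_state ... (m - 1).\<close>
primrec up_state :: "nat \<Rightarrow> real \<Rightarrow> (real \<Rightarrow> real) \<Rightarrow> (nat \<Rightarrow> nat set \<Rightarrow> (nat \<Rightarrow> real) \<Rightarrow> nat)
    \<Rightarrow> (nat \<Rightarrow> nat \<Rightarrow> nat \<Rightarrow> real) \<Rightarrow> nat \<Rightarrow> up_st" where
  "up_state n \<delta> u sel s 0 = ({..<n}, \<lambda>_. 1)"
| "up_state n \<delta> u sel s (Suc m) = up_round n \<delta> u sel s (Suc m) (up_state n \<delta> u sel s m)"

text \<open>Round m is executed iff m \<ge> 1 and UP did not stop (|I| = 1) after an earlier round.\<close>
definition up_executed :: "nat \<Rightarrow> real \<Rightarrow> (real \<Rightarrow> real) \<Rightarrow> (nat \<Rightarrow> nat set \<Rightarrow> (nat \<Rightarrow> real) \<Rightarrow> nat)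
    \<Rightarrow> (nat \<Rightarrow> nat \<Rightarrow> nat \<Rightarrow> real) \<Rightarrow> nat \<Rightarrow> bool" where
  "up_executed n \<delta> u sel s m \<longleftrightarrow>
     1 \<le> m \<and> (\<forall>k. 1 \<le> k \<and> k < m \<longrightarrow> card (fst (up_state n \<delta> u sel s k)) \<noteq> 1)"

definition up_cap :: "nat \<Rightarrow> real \<Rightarrow> (real \<Rightarrow> real) \<Rightarrow> (nat \<Rightarrow> nat set \<Rightarrow> (nat \<Rightarrow> real) \<Rightarrow> nat)
    \<Rightarrow> (nat \<Rightarrow> nat \<Rightarrow> nat \<Rightarrow> real) \<Rightarrow> nat \<Rightarrow> nat \<Rightarrow> real" where
  "up_cap n \<delta> u sel s m i = snd (up_state n \<delta> u sel s (m - 1)) i"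

definition up_return :: "nat \<Rightarrow> real \<Rightarrow> (real \<Rightarrow> real) \<Rightarrow> (nat \<Rightarrow> nat set \<Rightarrow> (nat \<Rightarrow> real) \<Rightarrow> nat)
    \<Rightarrow> (nat \<Rightarrow> nat \<Rightarrow> nat \<Rightarrow> real) \<Rightarrow> nat \<Rightarrow> nat" where
  "up_return n \<delta> u sel s m = up_istar n \<delta> u sel s m (up_state n \<delta> u sel s (m - 1))"

text \<open>F i k = Pr_{t ~ D_i}(t < k), matching the empirical Fhat (strict inequality).\<close>
definition run_cdf :: "real measure \<Rightarrow> real \<Rightarrow> real" where
  "run_cdf D k = measure D {t. t < k}"

definition exp_util :: "(real \<Rightarrow> real) \<Rightarrow> real measure \<Rightarrow> real" where
  "exp_util u D = (\<integral>t. u t \<partial>D)"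

end

theory Submission
  imports Defs "HOL-Real_Asymp.Real_Asymp"
begin


lemma inv_sq_partial: "(\<Sum>k<N. 1 / (real k + 1)^2) \<le> 33/20"
proof -
  have main: "(\<Sum>k<N. 1 / (real k + 1)^2) \<le> 33/20 - 1 / (real N + 1/2)" if "N \<ge> 2" for N
    using that
  proof (induction N rule: nat_induct_at_least)
    case base
    then show ?case by (simp add: numeral_eq_Suc)
  next
    case (Suc N)
    have "1 / (real N + 1)^2 \<le> 1 / (real N + 1/2) - 1 / (real N + 3/2)"
    proof -
      have e: "1 / (real N + 1/2) - 1 / (real N + 3/2) = 1 / ((real N + 1)^2 - 1/4)"
        by (simp add: field_simps power2_eq_square)
      have "1 / (real N + 1)^2 \<le> 1 / ((real N + 1)^2 - 1/4)"
      proof (rule divide_left_mono)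
        have "(1::real) \<le> (real N + 1)^2" by simp
        then show "0 < (real N + 1)\<^sup>2 * ((real N + 1)\<^sup>2 - 1 / 4)"
          by (intro mult_pos_pos) linarith+
      qed auto
      then show ?thesis using e by simp
    qed
    moreover have "real (Suc N) + 1/2 = real N + 3/2" by simp
    ultimately show ?case using Suc.IH by (simp add: add.commute)
  qed
  show ?thesis
  proof (cases "N \<ge> 2")
    case True
    have "0 \<le> 1 / (real N + 1/2)" by simp
    then show ?thesis using main[OF True] by linarith
  next
    case False
    then have "N = 0 \<or> N = 1" by auto
    then show ?thesis by auto
  qed
qed

locale UPdet =
  fixes n :: nat and \<delta> :: real and u :: "real \<Rightarrow> real"
    and sel :: "nat \<Rightarrow> nat set \<Rightarrow> (nat \<Rightarrow> real) \<Rightarrow> nat"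
    and s :: "nat \<Rightarrow> nat \<Rightarrow> nat \<Rightarrow> real"
    and U :: "nat \<Rightarrow> real" and F \<mu>1 \<mu>2 :: "nat \<Rightarrow> real \<Rightarrow> real" and iopt :: nat
  assumes u_range: "\<And>t. 0 \<le> u t \<and> u t \<le> 1"
    and u_lim: "(u \<longlongrightarrow> 0) at_top"
    and n: "1 \<le> n" and \<delta>: "0 < \<delta>" "\<delta> < 1"
    and iopt: "iopt < n" "\<And>i. i < n \<Longrightarrow> U i \<le> U iopt"
    and sel: "\<And>m I f. finite I \<Longrightarrow> I \<noteq> {} \<Longrightarrow> sel m I f \<in> I \<and> (\<forall>i\<in>I. f i \<le> f (sel m I f))"
    and F_range: "\<And>i \<kappa>. i < n \<Longrightarrow> 0 \<le> F i \<kappa> \<and> F i \<kappa> \<le> 1"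
    and mu: "\<And>i \<kappa>. i < n \<Longrightarrow> \<mu>2 i \<kappa> \<le> U i \<and> U i \<le> \<mu>1 i \<kappa> \<and> \<mu>1 i \<kappa> - \<mu>2 i \<kappa> = u \<kappa> * (1 - F i \<kappa>)"
    and good: "\<And>i m k. i < n \<Longrightarrow> 1 \<le> m \<Longrightarrow> k < m \<Longrightarrow>
       \<bar>up_Uhat u s i m (2^k) - \<mu>1 i (2^k)\<bar> \<le> (1 - u (2^k)) * up_alpha n \<delta> m (2^k) \<and>
       \<bar>up_Uhat u s i m (2^k) - u (2^k) * (1 - up_Fhat s i m (2^k)) - \<mu>2 i (2^k)\<bar> < up_alpha n \<delta> m (2^k)"
begin

definition "I m = fst (up_state n \<delta> u sel s m)"
definition "K m i = snd (up_state n \<delta> u sel s m) i"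
definition "LCBr m i = up_LCB n \<delta> u s i m (K (m - 1) i)"
definition "UCBr m i = up_UCB n \<delta> u s i m (K (m - 1) i)"
definition "istar m = sel m (I (m - 1)) (LCBr m)"
definition "al m i = up_alpha n \<delta> m (K (m - 1) i)"
definition "w m i = u (K (m - 1) i) * (1 - F i (K (m - 1) i))"

lemma LCBr_fun: "LCBr m = (\<lambda>i. up_LCB n \<delta> u s i m (K (m - 1) i))"
  by (rule ext) (simp add: LCBr_def)

lemma alpha_arg: assumes "1 \<le> m" "1 \<le> \<kappa>"
  shows "1 < 11 * real n * (real m)^2 * (log 2 \<kappa> + 1)^2 / \<delta>"
proof -
  have "0 \<le> log 2 \<kappa>" using assms by simp
  then have "1 \<le> (log 2 \<kappa> + 1)^2" by (simp add: one_le_power)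
  moreover have "1 \<le> (real m)^2" using assms by simp
  moreover have "1 \<le> real n" using n by simp
  ultimately have "1 * 1 * 1 \<le> real n * (real m)^2 * (log 2 \<kappa> + 1)^2"
    by (intro mult_mono) auto
  then have "11 \<le> 11 * real n * (real m)^2 * (log 2 \<kappa> + 1)^2" by simp
  then show ?thesis using \<delta> by (simp add: field_simps)
qed

lemma alpha_pos: assumes "1 \<le> m" "1 \<le> \<kappa>" shows "0 < up_alpha n \<delta> m \<kappa>"
  using alpha_arg[OF assms] assms unfolding up_alpha_def by simp

lemma I0: "I 0 = {..<n}" by (simp add: I_def)
lemma K0: "K 0 i = 1" by (simp add: K_def)

lemma I_Suc: "I (Suc m) = {i \<in> I m. \<not> UCBr (Suc m) i < LCBr (Suc m) (istar (Suc m))}"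
  by (simp add: I_def UCBr_def LCBr_fun istar_def up_round_def Let_def up_istar_def K_def)

lemma K_Suc: "K (Suc m) i = (if i \<in> I m \<and> 2 * al (Suc m) i \<le> u (K m i) * (1 - up_Fhat s i (Suc m) (K m i))
   then 2 * K m i else K m i)"
  by (simp add: I_def al_def up_round_def Let_def up_istar_def K_def)

lemma K_pow: "\<exists>k\<le>m. K m i = 2 ^ k"
proof (induction m)
  case 0 then show ?case by (simp add: K0)
next
  case (Suc m)
  then obtain k where k: "k \<le> m" "K m i = 2 ^ k" by auto
  show ?case
  proof (cases "K (Suc m) i = K m i")
    case True then show ?thesis using k by (intro exI[of _ k]) auto
  next
    case False
    then have "K (Suc m) i = 2 * K m i" by (simp add: K_Suc split: if_splits)
    then show ?thesis using k by (intro exI[of _ "Suc k"]) auto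
  qed
qed

lemma K_pos: "K m i > 0"
  using K_pow[of m i] by auto

lemma K_mono_Suc: "K m i \<le> K (Suc m) i"
  using K_pos[of m i] by (simp add: K_Suc)

lemma K_mono: "m \<le> m' \<Longrightarrow> K m i \<le> K m' i"
  by (induction rule: dec_induct) (auto intro: order_trans K_mono_Suc)

lemma I_anti_Suc: "I (Suc m) \<subseteq> I m"
  using I_Suc by auto

lemma I_anti: "m \<le> m' \<Longrightarrow> I m' \<subseteq> I m"
  by (induction rule: dec_induct) (use I_anti_Suc in blast)+

lemma I_sub: "I m \<subseteq> {..<n}"
  using I_anti[of 0 m] I0 by auto

lemma I_fin: "finite (I m)"
  using I_sub finite_subset by blast

lemma round_bounds:
  assumes "i < n" "1 \<le> m"
  shows "LCBr m i < U i" "U i - w m i - 2 * al m i < LCBr m i"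
    "U i \<le> UCBr m i" "UCBr m i \<le> U i + w m i + 2 * al m i"
    "w m i \<le> u (K (m - 1) i) * (1 - up_Fhat s i m (K (m - 1) i)) + 2 * al m i"
proof -
  obtain k where k: "k \<le> m - 1" "K (m - 1) i = 2 ^ k" using K_pow by blast
  have km: "k < m" using k assms by auto
  define kk where "kk = K (m - 1) i"
  have g: "\<bar>up_Uhat u s i m kk - \<mu>1 i kk\<bar> \<le> (1 - u kk) * al m i"
     "\<bar>up_Uhat u s i m kk - u kk * (1 - up_Fhat s i m kk) - \<mu>2 i kk\<bar> < al m i"
    using good[OF assms(1,2) km] k by (simp_all add: kk_def al_def)
  have mu': "\<mu>2 i kk \<le> U i" "U i \<le> \<mu>1 i kk" "\<mu>1 i kk - \<mu>2 i kk = u kk * (1 - F i kk)"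
    using mu[OF assms(1)] by auto
  have a0: "0 \<le> al m i" using alpha_pos[OF assms(2), of "K (m - 1) i"] k
    by (simp add: al_def one_le_power)
  have ua: "0 \<le> u kk * al m i" using a0 u_range by simp
  have L: "LCBr m i = up_Uhat u s i m kk - al m i - u kk * (1 - up_Fhat s i m kk)"
    by (simp add: LCBr_def up_LCB_def kk_def al_def)
  have Uc: "UCBr m i = up_Uhat u s i m kk + (1 - u kk) * al m i"
    by (simp add: UCBr_def up_UCB_def kk_def al_def)
  have W: "w m i = u kk * (1 - F i kk)" by (simp add: w_def kk_def)
  show "LCBr m i < U i" "U i - w m i - 2 * al m i < LCBr m i"
    "U i \<le> UCBr m i" "UCBr m i \<le> U i + w m i + 2 * al m i"
    "w m i \<le> u (K (m - 1) i) * (1 - up_Fhat s i m (K (m - 1) i)) + 2 * al m i"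
    using g mu' ua unfolding L Uc W kk_def[symmetric] by (auto simp: algebra_simps abs_if split: if_splits)
qed

lemma istar_props:
  assumes "1 \<le> m" "I (m - 1) \<noteq> {}"
  shows "istar m \<in> I (m - 1)" "\<And>j. j \<in> I (m - 1) \<Longrightarrow> LCBr m j \<le> LCBr m (istar m)"
  using sel[OF I_fin assms(2), of m "LCBr m"] by (auto simp: istar_def)

lemma iopt_in: "iopt \<in> I m"
proof (induction m)
  case 0 then show ?case using iopt by (simp add: I0)
next
  case (Suc m)
  have ne: "I (Suc m - 1) \<noteq> {}" using Suc by auto
  note st = istar_props[OF _ ne, simplified]
  have "istar (Suc m) < n" using st(1) I_sub by auto
  then have "LCBr (Suc m) (istar (Suc m)) < U (istar (Suc m))"
    by (intro round_bounds) auto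
  also have "\<dots> \<le> U iopt" using iopt \<open>istar (Suc m) < n\<close> by auto
  also have "\<dots> \<le> UCBr (Suc m) iopt" using iopt by (intro round_bounds) auto
  finally show ?case using Suc by (simp add: I_Suc)
qed

lemma istar_in: assumes "1 \<le> m" shows "istar m \<in> I (m - 1)" "istar m < n"
  "\<And>j. j \<in> I (m - 1) \<Longrightarrow> LCBr m j \<le> LCBr m (istar m)"
  using istar_props[OF assms] iopt_in I_sub by blast+

lemma part2:
  assumes "1 \<le> m" "2 * al m iopt + w m iopt \<le> \<epsilon>"
  shows "U iopt - \<epsilon> \<le> U (istar m)"
proof -
  have "U iopt - \<epsilon> < LCBr m iopt" using round_bounds(2)[OF iopt(1) assms(1)] assms by linarith
  also have "\<dots> \<le> LCBr m (istar m)" using istar_in[OF assms(1)] iopt_in by blast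
  also have "\<dots> < U (istar m)" using round_bounds(1)[OF istar_in(2)[OF assms(1)] assms(1)] .
  finally show ?thesis by simp
qed

lemma part3:
  assumes "i < n" "1 \<le> m"
    "2 * al m i + 2 * al m iopt + w m i + w m iopt \<le> U iopt - U i"
  shows "i \<notin> I m"
proof -
  obtain m' where m': "m = Suc m'" using assms(2) by (cases m) auto
  have "UCBr m i \<le> U i + w m i + 2 * al m i" using round_bounds(4)[OF assms(1,2)] .
  also have "\<dots> \<le> U iopt - w m iopt - 2 * al m iopt" using assms(3) by linarith
  also have "\<dots> < LCBr m iopt" using round_bounds(2)[OF iopt(1) assms(2)] .
  also have "\<dots> \<le> LCBr m (istar m)" using istar_in[OF assms(2)] iopt_in by blast
  finally show ?thesis by (simp add: I_Suc m')
qed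

lemma part1b:
  assumes "1 \<le> m" "card (I m) = 1"
  shows "istar m = iopt"
proof -
  obtain m' where m': "m = Suc m'" using assms(1) by (cases m) auto
  have "LCBr m (istar m) < U (istar m)" by (rule round_bounds(1)[OF istar_in(2)[OF assms(1)] assms(1)])
  also have "\<dots> \<le> UCBr m (istar m)" by (rule round_bounds(3)[OF istar_in(2)[OF assms(1)] assms(1)])
  finally have "istar m \<in> I m" using istar_in(1)[OF assms(1)] by (simp add: I_Suc m')
  moreover have "iopt \<in> I m" by (rule iopt_in)
  ultimately show ?thesis using assms(2) by (metis card_1_singletonE singletonD)
qed

lemma ev_const:
  fixes f :: "nat \<Rightarrow> real"
  assumes mono: "\<And>m m'. m \<le> m' \<Longrightarrow> f m \<le> f m'" and pw: "\<And>m. \<exists>k. f m = 2^k"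
    and bd: "\<And>m. f m \<le> H"
  shows "\<exists>m0. \<forall>m\<ge>m0. f m = f m0"
proof -
  have sub: "range f \<subseteq> (\<lambda>k. 2^k) ` {..nat \<lceil>H\<rceil>}"
  proof
    fix x assume "x \<in> range f"
    then obtain m where x: "x = f m" by auto
    obtain k where k: "f m = 2^k" using pw by blast
    have "real k < real (2^k)" using less_exp[of k] by linarith
    also have "\<dots> = 2^k" by simp
    also have "\<dots> \<le> H" using bd[of m] k by simp
    finally have "k \<le> nat \<lceil>H\<rceil>" by linarith
    then show "x \<in> (\<lambda>k. 2^k) ` {..nat \<lceil>H\<rceil>}" using x k by auto
  qed
  then have fin: "finite (range f)" by (rule finite_subset) auto
  have "Max (range f) \<in> range f" using fin by (intro Max_in) auto
  then obtain m0 where m0: "f m0 = Max (range f)" by auto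
  show ?thesis
  proof (intro exI allI impI)
    fix m assume "m0 \<le> m"
    then have "f m0 \<le> f m" by (rule mono)
    moreover have "f m \<le> Max (range f)" using fin by (intro Max_ge) auto
    ultimately show "f m = f m0" using m0 by simp
  qed
qed

definition "\<beta> m = sqrt (ln ((11 * real n / \<delta>) * (real m)^4) / (2 * real m))"

lemma al_le_beta: assumes "1 \<le> m" shows "al m j \<le> \<beta> m"
proof -
  obtain k where k: "k \<le> m - 1" "K (m - 1) j = 2 ^ k" using K_pow by blast
  have lg: "log 2 (K (m - 1) j) = real k" using k by simp
  have "real k + 1 \<le> real m" using k assms by linarith
  then have sq: "(real k + 1)^2 \<le> (real m)^2" by (intro power_mono) auto
  have arg1: "1 < 11 * real n * (real m)^2 * (log 2 (K (m - 1) j) + 1)^2 / \<delta>"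
    using alpha_arg[OF assms, of "K (m - 1) j"] k by (simp add: one_le_power)
  have "11 * real n * (real m)^2 * (log 2 (K (m - 1) j) + 1)^2 / \<delta>
      \<le> (11 * real n / \<delta>) * (real m)^4"
  proof -
    have "11 * real n * (real m)^2 * (real k + 1)^2 \<le> 11 * real n * (real m)^2 * (real m)^2"
      using sq by (intro mult_left_mono) auto
    moreover have "(11 * real n / \<delta>) * (real m)^4 = 11 * real n * (real m)^2 * (real m)^2 / \<delta>"
      by (simp add: eval_nat_numeral field_simps)
    ultimately show ?thesis using \<delta> lg by (simp add: divide_right_mono)
  qed
  then have "ln (11 * real n * (real m)^2 * (log 2 (K (m - 1) j) + 1)^2 / \<delta>)
      \<le> ln ((11 * real n / \<delta>) * (real m)^4)" using arg1 by (intro ln_mono) auto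
  then show ?thesis unfolding al_def \<beta>_def up_alpha_def using assms
    by (intro real_sqrt_le_mono divide_right_mono) auto
qed

lemma beta_lim: "\<beta> \<longlonglongrightarrow> 0"
proof -
  define c where "c = 11 * real n / \<delta>"
  have c: "c > 0" using n \<delta> by (simp add: c_def)
  have "((\<lambda>x::real. ln (c * x^4) / (2*x)) \<longlongrightarrow> 0) at_top" using c by real_asymp
  then have "((\<lambda>m. ln (c * (real m)^4) / (2 * real m)) \<longlongrightarrow> 0) sequentially"
    by (rule filterlim_compose[OF _ filterlim_real_sequentially])
  then have "((\<lambda>m. sqrt (ln (c * (real m)^4) / (2 * real m))) \<longlongrightarrow> sqrt 0) sequentially"
    by (rule tendsto_real_sqrt)
  then show ?thesis by (simp add: \<beta>_def[abs_def] c_def)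
qed

lemma al_small: assumes "\<eta> > 0" shows "eventually (\<lambda>m. al m j < \<eta>) sequentially"
proof -
  have "eventually (\<lambda>m. \<beta> m < \<eta>) sequentially" using order_tendstoD(2)[OF beta_lim assms] .
  moreover have "eventually (\<lambda>m. 1 \<le> m) sequentially" by (rule eventually_ge_at_top)
  ultimately show ?thesis
  proof eventually_elim
    case (elim m)
    then show ?case using al_le_beta[OF elim(2), of j] by linarith
  qed
qed

lemma conv:
  assumes j: "j < n" and inI: "\<And>m. j \<in> I m" and eta: "\<eta> > 0"
  shows "eventually (\<lambda>m. 2 * al m j + w m j < \<eta>) sequentially"
proof (cases "\<exists>H. \<forall>m. K m j \<le> H")
  case True
  then obtain H where H: "\<And>m. K m j \<le> H" by auto
  obtain m0 where m0: "\<And>m. m \<ge> m0 \<Longrightarrow> K m j = K m0 j"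
    using ev_const[of "\<lambda>m. K m j" H] K_mono K_pow H by blast
  have "eventually (\<lambda>m. al m j < \<eta> / 6) sequentially" using eta by (intro al_small) auto
  moreover have "eventually (\<lambda>m. Suc m0 \<le> m) sequentially" by (rule eventually_ge_at_top)
  ultimately show ?thesis
  proof eventually_elim
    case (elim m)
    then have m1: "1 \<le> m" by auto
    obtain m' where m': "m = Suc m'" using m1 by (cases m) auto
    have "K (Suc m') j = K m' j" using m0[of m'] m0[of "Suc m'"] elim m' by auto
    then have "\<not> (2 * al m j \<le> u (K (m - 1) j) * (1 - up_Fhat s j m (K (m - 1) j)))"
      using K_Suc[of m' j] inI[of m'] K_pos[of m' j] m' by (auto split: if_splits)
    then have "w m j < 4 * al m j" using round_bounds(5)[OF j m1] by linarith
    then show ?case using elim by linarith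
  qed
next
  case False
  have "eventually (\<lambda>x. u x < \<eta> / 2) at_top" using eta by (intro order_tendstoD(2)[OF u_lim]) auto
  then obtain N where N: "\<And>x. x \<ge> N \<Longrightarrow> u x < \<eta> / 2" by (auto simp: eventually_at_top_linorder)
  obtain m0 where m0: "K m0 j > N" using False by (auto simp: not_le)
  have "eventually (\<lambda>m. al m j < \<eta> / 4) sequentially" using eta by (intro al_small) auto
  moreover have "eventually (\<lambda>m. Suc m0 \<le> m) sequentially" by (rule eventually_ge_at_top)
  ultimately show ?thesis
  proof eventually_elim
    case (elim m)
    have "K m0 j \<le> K (m - 1) j" using elim by (intro K_mono) auto
    then have "u (K (m - 1) j) < \<eta> / 2" using m0 by (intro N) auto
    moreover have "w m j \<le> u (K (m - 1) j)"
      unfolding w_def using F_range[OF j] u_range by (intro mult_left_le) auto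
    ultimately show ?case using elim by linarith
  qed
qed

lemma elim_ev:
  assumes i: "i < n" "U i < U iopt"
  shows "eventually (\<lambda>m. i \<notin> I m) sequentially"
proof -
  have "\<exists>M. i \<notin> I M"
  proof (rule ccontr)
    assume "\<not> ?thesis"
    then have inI: "\<And>m. i \<in> I m" by auto
    define \<Delta> where "\<Delta> = U iopt - U i"
    have D: "\<Delta> > 0" using i by (simp add: \<Delta>_def)
    have "eventually (\<lambda>m. 2 * al m i + w m i < \<Delta> / 2) sequentially"
      using D by (intro conv i inI) auto
    moreover have "eventually (\<lambda>m. 2 * al m iopt + w m iopt < \<Delta> / 2) sequentially"
      using D iopt_in by (intro conv iopt) auto
    moreover have "eventually (\<lambda>m. 1 \<le> m) sequentially" by (rule eventually_ge_at_top)
    ultimately have "eventually (\<lambda>m. i \<notin> I m) sequentially"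
    proof eventually_elim
      case (elim m)
      then show ?case using part3[OF i(1) elim(3)] by (simp add: \<Delta>_def)
    qed
    then obtain m where "i \<notin> I m" by (auto simp: eventually_sequentially)
    then show False using inI by blast
  qed
  then obtain M where "i \<notin> I M" by auto
  then show ?thesis unfolding eventually_sequentially using I_anti by blast
qed

lemma elim_all: "eventually (\<lambda>m. \<forall>i\<in>{i. i < n \<and> U i < U iopt}. i \<notin> I m) sequentially"
  by (rule eventually_ball_finite) (auto intro: elim_ev)

lemma ret_eq: "up_return n \<delta> u sel s m = istar m"
  by (simp add: up_return_def up_istar_def istar_def I_def LCBr_fun K_def)

lemma cap_eq: "up_cap n \<delta> u sel s m i = K (m - 1) i"
  by (simp add: up_cap_def K_def)

lemma ex_m: "up_executed n \<delta> u sel s m \<Longrightarrow> 1 \<le> m"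
  by (simp add: up_executed_def)

lemma det_main:
  "((\<exists>M0. \<forall>m\<ge>M0. up_executed n \<delta> u sel s m \<longrightarrow> U (up_return n \<delta> u sel s m) = U iopt)
     \<and> (\<forall>m. up_executed n \<delta> u sel s m \<and> card (fst (up_state n \<delta> u sel s m)) = 1 \<longrightarrow> U (up_return n \<delta> u sel s m) = U iopt)
     \<and> ((\<forall>i<n. i \<noteq> iopt \<longrightarrow> U i < U iopt) \<longrightarrow> (\<exists>m. up_executed n \<delta> u sel s m \<and> fst (up_state n \<delta> u sel s m) = {iopt})))
    \<and> (\<forall>\<epsilon>::real. \<forall>m. up_executed n \<delta> u sel s m \<longrightarrow>
         2 * up_alpha n \<delta> m (up_cap n \<delta> u sel s m iopt) + u (up_cap n \<delta> u sel s m iopt) * (1 - F iopt (up_cap n \<delta> u sel s m iopt)) \<le> \<epsilon> \<longrightarrow>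
         U (up_return n \<delta> u sel s m) \<ge> U iopt - \<epsilon>)
    \<and> (\<forall>i<n. U i < U iopt \<longrightarrow> (\<forall>m. up_executed n \<delta> u sel s m \<longrightarrow>
         2 * up_alpha n \<delta> m (up_cap n \<delta> u sel s m i) + 2 * up_alpha n \<delta> m (up_cap n \<delta> u sel s m iopt)
           + u (up_cap n \<delta> u sel s m i) * (1 - F i (up_cap n \<delta> u sel s m i)) + u (up_cap n \<delta> u sel s m iopt) * (1 - F iopt (up_cap n \<delta> u sel s m iopt))
           \<le> U iopt - U i \<longrightarrow> i \<notin> fst (up_state n \<delta> u sel s m)))"
proof -
  note fold = I_def[symmetric] ret_eq cap_eq al_def[symmetric] w_def[symmetric]
  obtain M where M: "\<And>m i. m \<ge> M \<Longrightarrow> i < n \<Longrightarrow> U i < U iopt \<Longrightarrow> i \<notin> I m"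
    using elim_all by (auto simp: eventually_sequentially)
  have A: "\<exists>M0. \<forall>m\<ge>M0. up_executed n \<delta> u sel s m \<longrightarrow> U (istar m) = U iopt"
  proof (intro exI[of _ "Suc M"] allI impI)
    fix m assume m: "Suc M \<le> m" "up_executed n \<delta> u sel s m"
    have "istar m \<in> I (m - 1)" "istar m < n" using istar_in m by auto
    then have "\<not> U (istar m) < U iopt" using M[of "m - 1" "istar m"] m by force
    then show "U (istar m) = U iopt" using iopt(2)[OF \<open>istar m < n\<close>] by linarith
  qed
  have B: "\<forall>m. up_executed n \<delta> u sel s m \<and> card (I m) = 1 \<longrightarrow> U (istar m) = U iopt"
    using part1b ex_m by auto
  have C: "\<exists>m. up_executed n \<delta> u sel s m \<and> I m = {iopt}" if uq: "\<forall>i<n. i \<noteq> iopt \<longrightarrow> U i < U iopt"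
  proof -
    define M' where "M' = max M 1"
    have "I M' \<subseteq> {iopt}" using M[of M'] uq I_sub by (force simp: M'_def)
    then have "I M' = {iopt}" using iopt_in by auto
    then have ex1: "1 \<le> M' \<and> card (I M') = 1" by (simp add: M'_def)
    define m0 where "m0 = (LEAST m. 1 \<le> m \<and> card (I m) = 1)"
    have m0: "1 \<le> m0 \<and> card (I m0) = 1" unfolding m0_def by (rule LeastI[of "\<lambda>m. 1 \<le> m \<and> card (I m) = 1", OF ex1])
    have "\<And>k. 1 \<le> k \<Longrightarrow> k < m0 \<Longrightarrow> card (I k) \<noteq> 1"
      unfolding m0_def using not_less_Least by blast
    then have "up_executed n \<delta> u sel s m0" using m0 by (auto simp: up_executed_def I_def)
    moreover have "I m0 = {iopt}" using m0 iopt_in[of m0] by (metis card_1_singletonE singletonD)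
    ultimately show ?thesis by blast
  qed
  have P2: "\<forall>\<epsilon>::real. \<forall>m. up_executed n \<delta> u sel s m \<longrightarrow> 2 * al m iopt + w m iopt \<le> \<epsilon> \<longrightarrow> U (istar m) \<ge> U iopt - \<epsilon>"
    using part2 ex_m by blast
  have P3: "\<forall>i<n. U i < U iopt \<longrightarrow> (\<forall>m. up_executed n \<delta> u sel s m \<longrightarrow>
         2 * al m i + 2 * al m iopt + w m i + w m iopt \<le> U iopt - U i \<longrightarrow> i \<notin> I m)"
    using part3 ex_m by blast
  show ?thesis unfolding fold using A B C P2 P3 by blast
qed

end


lemma hoeff_wrap:
  fixes M :: "'w measure" and X :: "nat \<Rightarrow> 'w \<Rightarrow> real" and DD :: "real measure"
  assumes M: "prob_space M"
    and meas: "\<And>j. X j \<in> borel_measurable M"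
    and dis: "\<And>j. j < m \<Longrightarrow> distr M borel (X j) = DD"
    and ind: "prob_space.indep_vars M (\<lambda>_. borel) X {..<m}"
    and g: "g \<in> borel_measurable borel" and gab: "\<And>x. a \<le> g x \<and> g x \<le> b" and ab: "a < b"
    and m: "1 \<le> m" and eps: "0 \<le> \<epsilon>"
  shows "measure M {\<omega>\<in>space M. \<epsilon> \<le> \<bar>(\<Sum>j<m. g (X j \<omega>)) / real m - (\<integral>t. g t \<partial>DD)\<bar>}
          \<le> 2 * exp (- 2 * real m * \<epsilon>^2 / (b - a)^2)"
proof -
  interpret prob_space M by (rule M)
  have gm[measurable]: "g \<in> borel_measurable borel" by (rule g)
  have Xm[measurable]: "\<And>j. X j \<in> borel_measurable M" by (rule meas)
  have ind2: "indep_vars (\<lambda>_. borel) (\<lambda>j \<omega>. g (X j \<omega>)) {..<m}"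
    by (rule indep_vars_compose2[OF ind]) simp
  have dX: "distr M borel (\<lambda>\<omega>. g (X j \<omega>)) = distr DD borel g" if "j < m" for j
  proof -
    have "distr M borel (\<lambda>\<omega>. g (X j \<omega>)) = distr (distr M borel (X j)) borel g"
      by (subst distr_distr) (auto simp: comp_def)
    then show ?thesis using dis[OF that] by simp
  qed
  interpret H: Hoeffding_ineq_iid M "{..<m}" "\<lambda>j \<omega>. g (X j \<omega>)" "\<lambda>\<omega>. g (X 0 \<omega>)" a b
    "expectation (\<lambda>\<omega>. g (X 0 \<omega>))"
  proof unfold_locales
    show "distr M borel (\<lambda>\<omega>. g (X i \<omega>)) = distr M borel (\<lambda>\<omega>. g (X 0 \<omega>))" if "i \<in> {..<m}" for i
      using dX[of i] dX[of 0] that m by auto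
  qed (use ind2 gab in auto)
  have mu: "expectation (\<lambda>\<omega>. g (X 0 \<omega>)) = (\<integral>t. g t \<partial>DD)"
  proof -
    have "(\<integral>t. g t \<partial>DD) = (\<integral>t. g t \<partial>distr M borel (X 0))" using dis[of 0] m by simp
    also have "\<dots> = expectation (\<lambda>\<omega>. g (X 0 \<omega>))" by (rule integral_distr) auto
    finally show ?thesis by simp
  qed
  have "prob {x \<in> space M. \<epsilon> \<le> \<bar>(\<Sum>j\<in>{..<m}. g (X j x)) / real (card {..<m}) - expectation (\<lambda>\<omega>. g (X 0 \<omega>))\<bar>}
      \<le> 2 * exp (- 2 * real (card {..<m}) * \<epsilon>\<^sup>2 / (b - a)\<^sup>2)"
    by (rule H.Hoeffding_ineq_abs_ge'[OF eps ab]) (use m in \<open>auto simp: lessThan_empty_iff\<close>)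
  then show ?thesis using mu by simp
qed

lemma alpha_nonneg:
  assumes "1 \<le> m" "1 \<le> n" "0 < \<delta>" "\<delta> < 1"
  shows "0 \<le> up_alpha n \<delta> m (2^k)"
proof -
  have "1 * 1 * 1 \<le> real n * (real m)^2 * (real k + 1)^2"
    using assms by (intro mult_mono) (auto simp: one_le_power)
  then have L1: "1 < 11 * real n * (real m)^2 * (real k + 1)^2 / \<delta>" using assms by (simp add: field_simps)
  have lg: "log 2 ((2::real)^k) = real k" by simp
  show ?thesis unfolding up_alpha_def lg using L1 by simp
qed

lemma alpha_exp:
  assumes "1 \<le> m" "1 \<le> n" "0 < \<delta>" "\<delta> < 1"
  shows "exp (- 2 * real m * (up_alpha n \<delta> m (2^k))^2) = \<delta> / (11 * real n * (real m)^2 * (real k + 1)^2)"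
proof -
  define L where "L = 11 * real n * (real m)^2 * (real k + 1)^2 / \<delta>"
  have "1 * 1 * 1 \<le> real n * (real m)^2 * (real k + 1)^2"
    using assms by (intro mult_mono) (auto simp: one_le_power)
  then have L1: "1 < L" using assms by (simp add: L_def field_simps)
  have lg: "log 2 ((2::real)^k) = real k" by simp
  have "(up_alpha n \<delta> m (2^k))^2 = ln L / (2 * real m)"
    unfolding up_alpha_def lg L_def[symmetric] using L1 assms by simp
  then have "- 2 * real m * (up_alpha n \<delta> m (2^k))^2 = - ln L" using assms by simp
  then have "exp (- 2 * real m * (up_alpha n \<delta> m (2^k))^2) = 1 / L"
    using L1 by (simp add: exp_minus inverse_eq_divide)
  then show ?thesis using assms by (simp add: L_def)
qed

lemma sum_ident:
  fixes x :: "nat \<Rightarrow> real"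
  assumes "1 \<le> m"
  shows "(\<Sum>j<m. u (min (x j) \<kappa>)) / real m - u \<kappa> * (1 - real (card {j. j < m \<and> min (x j) \<kappa> < \<kappa>}) / real m)
     = (\<Sum>j<m. (if x j < \<kappa> then u (x j) else 0)) / real m"
proof -
  have c: "real (card {j. j < m \<and> min (x j) \<kappa> < \<kappa>}) = (\<Sum>j<m. if x j < \<kappa> then 1 else 0)"
  proof -
    have "{j. j < m \<and> min (x j) \<kappa> < \<kappa>} = {j\<in>{..<m}. x j < \<kappa>}" by auto
    then have "real (card {j. j < m \<and> min (x j) \<kappa> < \<kappa>}) = (\<Sum>j\<in>{j\<in>{..<m}. x j < \<kappa>}. 1)" by simp
    also have "\<dots> = (\<Sum>j<m. if x j < \<kappa> then 1 else 0)" by (rule sum.inter_filter) simp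
    finally show ?thesis .
  qed
  have "(\<Sum>j<m. u (min (x j) \<kappa>)) - u \<kappa> * real m + u \<kappa> * (\<Sum>j<m. if x j < \<kappa> then 1 else 0)
      = (\<Sum>j<m. u (min (x j) \<kappa>) - u \<kappa> + u \<kappa> * (if x j < \<kappa> then 1 else 0))"
    by (simp add: sum.distrib sum_subtractf sum_distrib_left)
  also have "\<dots> = (\<Sum>j<m. (if x j < \<kappa> then u (x j) else 0))"
    by (rule sum.cong) auto
  finally have e: "(\<Sum>j<m. u (min (x j) \<kappa>)) - u \<kappa> * real m + u \<kappa> * (\<Sum>j<m. if x j < \<kappa> then 1 else 0)
      = (\<Sum>j<m. (if x j < \<kappa> then u (x j) else 0))" .
  show ?thesis unfolding c e[symmetric] using assms by (simp add: field_simps)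
qed

lemma u_meas:
  fixes u :: "real \<Rightarrow> real"
  assumes "\<forall>s t. s \<le> t \<longrightarrow> u t \<le> u s"
  shows "u \<in> borel_measurable borel"
proof -
  have "(\<lambda>x. - u x) \<in> borel_measurable borel"
    by (rule borel_measurable_mono) (use assms in \<open>auto simp: mono_def\<close>)
  then have "(\<lambda>x. - (- u x)) \<in> borel_measurable borel" by measurable
  then show ?thesis by simp
qed

lemma mu_facts:
  fixes u :: "real \<Rightarrow> real" and D0 :: "real measure"
  assumes D0: "prob_space D0" "sets D0 = sets borel"
    and ur: "\<forall>t. 0 \<le> u t \<and> u t \<le> 1" and ua: "\<forall>s t. s \<le> t \<longrightarrow> u t \<le> u s"
  shows "(\<integral>t. (if t < \<kappa> then u t else 0) \<partial>D0) \<le> (\<integral>t. u t \<partial>D0)"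
    "(\<integral>t. u t \<partial>D0) \<le> (\<integral>t. u (min t \<kappa>) \<partial>D0)"
    "(\<integral>t. u (min t \<kappa>) \<partial>D0) - (\<integral>t. (if t < \<kappa> then u t else 0) \<partial>D0)
       = u \<kappa> * (1 - measure D0 {t. t < \<kappa>})"
    "0 \<le> measure D0 {t. t < \<kappa>} \<and> measure D0 {t. t < \<kappa>} \<le> 1"
    "u \<kappa> = 1 \<Longrightarrow> (\<integral>t. u (min t \<kappa>) \<partial>D0) = 1"
proof -
  interpret prob_space D0 by (rule D0(1))
  have um[measurable]: "u \<in> borel_measurable borel" by (rule u_meas[OF ua])
  have mc: "measurable D0 N = measurable borel N" for N :: "'b measure"
    by (rule measurable_cong_sets) (auto simp: D0(2))
  have sp: "space D0 = UNIV" using sets_eq_imp_space_eq[OF D0(2)] by simp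
  have int: "integrable D0 f" if "f \<in> borel_measurable borel" "\<And>t. \<bar>f t\<bar> \<le> 1" for f :: "real \<Rightarrow> real"
    by (rule integrable_const_bound[where B=1]) (use that mc in auto)
  have i1: "integrable D0 (\<lambda>t. u (min t \<kappa>))" by (rule int) (use ur in auto)
  have i2: "integrable D0 (\<lambda>t. (if t < \<kappa> then u t else 0))" by (rule int) (use ur in auto)
  have i0: "integrable D0 u" by (rule int) (use ur in auto)
  show "(\<integral>t. (if t < \<kappa> then u t else 0) \<partial>D0) \<le> (\<integral>t. u t \<partial>D0)"
    by (rule integral_mono[OF i2 i0]) (use ur in auto)
  show "(\<integral>t. u t \<partial>D0) \<le> (\<integral>t. u (min t \<kappa>) \<partial>D0)"
    by (rule integral_mono[OF i0 i1]) (use ua in auto)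
  have "(\<integral>t. u (min t \<kappa>) \<partial>D0) - (\<integral>t. (if t < \<kappa> then u t else 0) \<partial>D0)
      = (\<integral>t. u (min t \<kappa>) - (if t < \<kappa> then u t else 0) \<partial>D0)"
    by (rule Bochner_Integration.integral_diff[OF i1 i2, symmetric])
  also have "\<dots> = (\<integral>t. u \<kappa> * indicator {t. \<kappa> \<le> t} t \<partial>D0)"
    by (rule Bochner_Integration.integral_cong) (auto simp: indicator_def)
  also have "\<dots> = u \<kappa> * measure D0 {t. \<kappa> \<le> t}"
    by (simp add: sp)
  also have "measure D0 {t. \<kappa> \<le> t} = 1 - measure D0 {t. t < \<kappa>}"
  proof -
    have "{t. \<kappa> \<le> t} = space D0 - {t. t < \<kappa>}" using sp by auto
    moreover have "{t. t < \<kappa>} \<in> sets D0" using D0(2) by simp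
    ultimately show ?thesis by (simp add: prob_compl)
  qed
  finally show "(\<integral>t. u (min t \<kappa>) \<partial>D0) - (\<integral>t. (if t < \<kappa> then u t else 0) \<partial>D0)
       = u \<kappa> * (1 - measure D0 {t. t < \<kappa>})" .
  show "0 \<le> measure D0 {t. t < \<kappa>} \<and> measure D0 {t. t < \<kappa>} \<le> 1" by simp
  assume u1: "u \<kappa> = 1"
  have "u (min t \<kappa>) = 1" for t
  proof -
    have "u \<kappa> \<le> u (min t \<kappa>)" using ua by simp
    moreover have "u (min t \<kappa>) \<le> 1" using ur by simp
    ultimately show ?thesis using u1 by linarith
  qed
  then show "(\<integral>t. u (min t \<kappa>) \<partial>D0) = 1" by (simp add: prob_space)
qed

theorem theorem4:
  fixes M :: "'w measure" and D :: "nat \<Rightarrow> real measure" and u :: "real \<Rightarrow> real"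
    and n :: nat and \<delta> :: real and iopt :: nat
    and T :: "nat \<Rightarrow> nat \<Rightarrow> nat \<Rightarrow> 'w \<Rightarrow> real"
    and sel :: "nat \<Rightarrow> nat set \<Rightarrow> (nat \<Rightarrow> real) \<Rightarrow> nat"
  assumes M: "prob_space M"
    and u_range: "\<forall>t. 0 \<le> u t \<and> u t \<le> 1"
    and u_antimono: "\<forall>s t. s \<le> t \<longrightarrow> u t \<le> u s"
    and u0: "u 0 = 1"
    and u_lim: "(u \<longlongrightarrow> 0) at_top"
    and n: "1 \<le> n"
    and D: "\<forall>i<n. prob_space (D i) \<and> sets (D i) = sets borel \<and> (AE t in D i. 0 \<le> t)"
    and T_meas: "\<forall>i<n. \<forall>m j. T i m j \<in> borel_measurable M"
    and T_distr: "\<forall>i<n. \<forall>m j. j < m \<longrightarrow> distr M borel (T i m j) = D i"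
    and T_indep: "\<forall>i<n. \<forall>m. prob_space.indep_vars M (\<lambda>_. borel) (\<lambda>j. T i m j) {..<m}"
    and iopt: "iopt < n" "\<forall>i<n. exp_util u (D i) \<le> exp_util u (D iopt)"
    and sel: "\<forall>m I f. finite I \<and> I \<noteq> {} \<longrightarrow> sel m I f \<in> I \<and> (\<forall>i\<in>I. f i \<le> f (sel m I f))"
    and \<delta>: "0 < \<delta>" "\<delta> < 1"
  shows "\<exists>E \<in> sets M. measure M E \<ge> 1 - \<delta> \<and> (\<forall>\<omega>\<in>E.
    let s = (\<lambda>i m j. T i m j \<omega>);
        U = (\<lambda>i. exp_util u (D i));
        F = (\<lambda>i. run_cdf (D i));
        ex = up_executed n \<delta> u sel s;
        I = (\<lambda>m. fst (up_state n \<delta> u sel s m));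
        cap = up_cap n \<delta> u sel s;
        ret = up_return n \<delta> u sel s;
        \<alpha> = up_alpha n \<delta>
    in
    \<comment> \<open>(1) UP eventually returns an optimal algorithm\<close>
    ((\<exists>M0. \<forall>m\<ge>M0. ex m \<longrightarrow> U (ret m) = U iopt)
     \<and> (\<forall>m. ex m \<and> card (I m) = 1 \<longrightarrow> U (ret m) = U iopt)
     \<and> ((\<forall>i<n. i \<noteq> iopt \<longrightarrow> U i < U iopt) \<longrightarrow> (\<exists>m. ex m \<and> I m = {iopt})))
    \<comment> \<open>(2) epsilon-optimality of the algorithm returned at the end of round m\<close>
    \<and> (\<forall>\<epsilon>::real. \<forall>m. ex m \<longrightarrow>
         2 * \<alpha> m (cap m iopt) + u (cap m iopt) * (1 - F iopt (cap m iopt)) \<le> \<epsilon> \<longrightarrow>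
         U (ret m) \<ge> U iopt - \<epsilon>)
    \<comment> \<open>(3) elimination of suboptimal algorithms\<close>
    \<and> (\<forall>i<n. U i < U iopt \<longrightarrow> (\<forall>m. ex m \<longrightarrow>
         2 * \<alpha> m (cap m i) + 2 * \<alpha> m (cap m iopt)
           + u (cap m i) * (1 - F i (cap m i)) + u (cap m iopt) * (1 - F iopt (cap m iopt))
           \<le> U iopt - U i \<longrightarrow> i \<notin> I m)))"
proof -
  interpret P: prob_space M by (rule M)
  have um[measurable]: "u \<in> borel_measurable borel" by (rule u_meas[OF u_antimono])
  define S1 where "S1 i m \<kappa> \<omega> = (\<Sum>j<m. u (min (T i m j \<omega>) \<kappa>))" for i m \<kappa> \<omega>
  define S2 where "S2 i m \<kappa> \<omega> = (\<Sum>j<m. (if T i m j \<omega> < \<kappa> then u (T i m j \<omega>) else 0))" for i m \<kappa> \<omega>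
  define mu1 where "mu1 i \<kappa> = (\<integral>t. u (min t \<kappa>) \<partial>D i)" for i \<kappa>
  define mu2 where "mu2 i \<kappa> = (\<integral>t. (if t < \<kappa> then u t else 0) \<partial>D i)" for i \<kappa>
  define al where "al m \<kappa> = up_alpha n \<delta> m \<kappa>" for m \<kappa>
  define B1 where "B1 i m k = {\<omega>\<in>space M. (1 - u (2^k)) * al m (2^k) < \<bar>S1 i m (2^k) \<omega> / real m - mu1 i (2^k)\<bar>}" for i m k
  define B2 where "B2 i m k = {\<omega>\<in>space M. al m (2^k) \<le> \<bar>S2 i m (2^k) \<omega> / real m - mu2 i (2^k)\<bar>}" for i m k
  define Bm where "Bm m = (\<Union>i\<in>{..<n}. \<Union>k\<in>{..<m}. B1 i m k \<union> B2 i m k)" for m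
  define E where "E = space M - (\<Union>m. Bm (Suc m))"
  have Bsets: "B1 i m k \<in> sets M \<and> B2 i m k \<in> sets M" if i: "i < n" for i m k
  proof -
    have [measurable]: "\<And>m j. T i m j \<in> borel_measurable M" using T_meas i by auto
    show ?thesis unfolding B1_def B2_def S1_def S2_def by measurable
  qed
  have Bmsets: "Bm m \<in> sets M" for m
    unfolding Bm_def using Bsets by (intro sets.finite_UN sets.Un) auto
  have Usets: "(\<Union>m. Bm (Suc m)) \<in> sets M"
    using Bmsets by (intro sets.countable_UN) auto
  have Esets: "E \<in> sets M" unfolding E_def using Usets by auto
  have Dfacts: "prob_space (D i)" "sets (D i) = sets borel" if "i < n" for i using D that by auto
  have Bbound: "measure M (B1 i m k \<union> B2 i m k) \<le> 4 * (\<delta> / (11 * real n * (real m)^2 * (real k + 1)^2))"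
    if i: "i < n" and m: "1 \<le> m" for i m k
  proof -
    define \<kappa> :: real where "\<kappa> = 2^k"
    define q where "q = \<delta> / (11 * real n * (real m)^2 * (real k + 1)^2)"
    have q: "exp (- 2 * real m * (al m \<kappa>)^2) = q"
      unfolding q_def al_def \<kappa>_def by (rule alpha_exp) (use m n \<delta> in auto)
    have a0: "0 \<le> al m \<kappa>" unfolding al_def \<kappa>_def by (rule alpha_nonneg) (use m n \<delta> in auto)
    have [measurable]: "\<And>m j. T i m j \<in> borel_measurable M" using T_meas i by auto
    have Ti: "\<And>j. j < m \<Longrightarrow> distr M borel (T i m j) = D i" using T_distr i by auto
    have ind: "prob_space.indep_vars M (\<lambda>_. borel) (T i m) {..<m}" using T_indep i by auto
    have b1: "measure M (B1 i m k) \<le> 2 * q"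
    proof (cases "u \<kappa> = 1")
      case True
      have "\<And>j. u (min (T i m j \<omega>) \<kappa>) = 1" for \<omega>
      proof -
        fix j
        have "u \<kappa> \<le> u (min (T i m j \<omega>) \<kappa>)" using u_antimono by simp
        moreover have "u (min (T i m j \<omega>) \<kappa>) \<le> 1" using u_range by simp
        ultimately show "u (min (T i m j \<omega>) \<kappa>) = 1" using True by linarith
      qed
      then have "S1 i m \<kappa> \<omega> / real m = 1" for \<omega> using m by (simp add: S1_def)
      moreover have "mu1 i \<kappa> = 1" unfolding mu1_def
        by (rule mu_facts(5)[OF Dfacts[OF i] u_range u_antimono True])
      ultimately have "B1 i m k = {}" using True by (simp add: B1_def \<kappa>_def[symmetric])
      moreover have "0 \<le> q" using \<delta> by (simp add: q_def)
      ultimately show ?thesis by simp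
    next
      case False
      then have ul: "u \<kappa> < 1" using u_range by (meson le_less)
      have "B1 i m k \<subseteq> {\<omega>\<in>space M. (1 - u \<kappa>) * al m \<kappa> \<le> \<bar>(\<Sum>j<m. u (min (T i m j \<omega>) \<kappa>)) / real m - (\<integral>t. u (min t \<kappa>) \<partial>D i)\<bar>}"
        by (auto simp: B1_def S1_def mu1_def \<kappa>_def)
      then have "measure M (B1 i m k) \<le> measure M {\<omega>\<in>space M. (1 - u \<kappa>) * al m \<kappa> \<le> \<bar>(\<Sum>j<m. u (min (T i m j \<omega>) \<kappa>)) / real m - (\<integral>t. u (min t \<kappa>) \<partial>D i)\<bar>}"
        by (intro P.finite_measure_mono) measurable
      also have "\<dots> \<le> 2 * exp (- 2 * real m * ((1 - u \<kappa>) * al m \<kappa>)^2 / (1 - u \<kappa>)^2)"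
        by (rule hoeff_wrap[OF M, where X="T i m" and DD="D i"])
           (use Ti ind u_range u_antimono ul m a0 in \<open>auto intro!: mult_nonneg_nonneg\<close>)
      also have "- 2 * real m * ((1 - u \<kappa>) * al m \<kappa>)^2 / (1 - u \<kappa>)^2 = - 2 * real m * (al m \<kappa>)^2"
        using ul by (simp add: power_mult_distrib)
      finally show ?thesis using q by simp
    qed
    have b2: "measure M (B2 i m k) \<le> 2 * q"
    proof -
      have "B2 i m k = {\<omega>\<in>space M. al m \<kappa> \<le> \<bar>(\<Sum>j<m. (\<lambda>t. if t < \<kappa> then u t else 0) (T i m j \<omega>)) / real m - (\<integral>t. (\<lambda>t. if t < \<kappa> then u t else 0) t \<partial>D i)\<bar>}"
        by (simp add: B2_def S2_def mu2_def \<kappa>_def)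
      also have "measure M \<dots> \<le> 2 * exp (- 2 * real m * (al m \<kappa>)^2 / (1 - 0)^2)"
        by (rule hoeff_wrap[OF M, where X="T i m" and DD="D i"])
           (use Ti ind u_range m a0 in auto)
      finally show ?thesis using q by simp
    qed
    have "measure M (B1 i m k \<union> B2 i m k) \<le> measure M (B1 i m k) + measure M (B2 i m k)"
      using Bsets[OF i] by (intro measure_Un_le) auto
    then show ?thesis using b1 b2 by (simp add: q_def)
  qed
  have Bmbound: "measure M (Bm m) \<le> 3 * \<delta> / 5 * (1 / (real m)^2)" if m: "1 \<le> m" for m
  proof -
    have "measure M (Bm m) \<le> (\<Sum>i<n. measure M (\<Union>k\<in>{..<m}. B1 i m k \<union> B2 i m k))"
      unfolding Bm_def using Bsets by (intro measure_UNION_le) (auto intro!: sets.finite_UN)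
    also have "\<dots> \<le> (\<Sum>i<n. \<Sum>k<m. measure M (B1 i m k \<union> B2 i m k))"
      using Bsets by (intro sum_mono measure_UNION_le) auto
    also have "\<dots> \<le> (\<Sum>i<n. \<Sum>k<m. (4 * \<delta> / (11 * real n * (real m)^2)) * (1 / (real k + 1)^2))"
      by (intro sum_mono) (use Bbound m in auto)
    also have "\<dots> = real n * (4 * \<delta> / (11 * real n * (real m)^2)) * (\<Sum>k<m. 1 / (real k + 1)^2)"
      by (simp only: sum_distrib_left[symmetric] sum_constant card_lessThan) (simp add: mult_ac)
    also have "\<dots> \<le> real n * (4 * \<delta> / (11 * real n * (real m)^2)) * (33/20)"
      using \<delta> by (intro mult_left_mono inv_sq_partial) auto
    also have "\<dots> = 3 * \<delta> / 5 * (1 / (real m)^2)" using n by (simp add: field_simps)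
    finally show ?thesis .
  qed
  define g where "g m = 3 * \<delta> / 5 * (1 / real ((m + 1)^2))" for m :: nat
  have gs: "summable g" unfolding g_def
    using inverse_squares_sums by (intro summable_mult) (rule sums_summable)
  have fle: "measure M (Bm (Suc m)) \<le> g m" for m
    using Bmbound[of "Suc m"] by (simp add: g_def add.commute)
  have fs: "summable (\<lambda>m. measure M (Bm (Suc m)))"
    by (rule summable_comparison_test[OF _ gs]) (use fle in auto)
  have "measure M (\<Union>m. Bm (Suc m)) \<le> (\<Sum>m. measure M (Bm (Suc m)))"
    using Bmsets fs by (intro P.finite_measure_subadditive_countably) auto
  also have "\<dots> \<le> (\<Sum>m. g m)" by (rule suminf_le[OF fle fs gs])
  also have "\<dots> \<le> 3 * \<delta> / 5 * (33/20)"
  proof (rule suminf_le_const[OF gs])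
    fix N
    have "sum g {..<N} = 3 * \<delta> / 5 * (\<Sum>k<N. 1 / (real k + 1)^2)"
      by (simp add: g_def sum_distrib_left add.commute)
    also have "\<dots> \<le> 3 * \<delta> / 5 * (33/20)" using \<delta> by (intro mult_left_mono inv_sq_partial) auto
    finally show "sum g {..<N} \<le> 3 * \<delta> / 5 * (33/20)" .
  qed
  finally have Ub: "measure M (\<Union>m. Bm (Suc m)) \<le> 3 * \<delta> / 5 * (33/20)" .
  have mE: "measure M E \<ge> 1 - \<delta>"
    using Ub \<delta> P.prob_compl[OF Usets] by (simp add: E_def)
  show ?thesis
  proof (rule bexI[where x=E], intro conjI ballI)
    show "1 - \<delta> \<le> measure M E" by (rule mE)
    show "E \<in> sets M" by (rule Esets)
  next
    fix \<omega> assume \<omega>: "\<omega> \<in> E"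
    define s where "s = (\<lambda>i m j. T i m j \<omega>)"
    have good: "\<bar>up_Uhat u s i m (2^k) - mu1 i (2^k)\<bar> \<le> (1 - u (2^k)) * up_alpha n \<delta> m (2^k) \<and>
       \<bar>up_Uhat u s i m (2^k) - u (2^k) * (1 - up_Fhat s i m (2^k)) - mu2 i (2^k)\<bar> < up_alpha n \<delta> m (2^k)"
      if i: "i < n" and m: "1 \<le> m" and k: "k < m" for i m k
    proof -
      have sp: "\<omega> \<in> space M" and nB: "\<omega> \<notin> Bm (Suc (m - 1))" using \<omega> by (auto simp: E_def)
      then have "\<omega> \<notin> B1 i m k \<union> B2 i m k" using i k m by (auto simp: Bm_def)
      then have c1: "\<not> (1 - u (2^k)) * al m (2^k) < \<bar>S1 i m (2^k) \<omega> / real m - mu1 i (2^k)\<bar>"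
        and c2: "\<not> al m (2^k) \<le> \<bar>S2 i m (2^k) \<omega> / real m - mu2 i (2^k)\<bar>"
        using sp by (auto simp: B1_def B2_def)
      have e1: "up_Uhat u s i m (2^k) = S1 i m (2^k) \<omega> / real m"
        by (simp add: up_Uhat_def S1_def s_def)
      have e2: "up_Uhat u s i m (2^k) - u (2^k) * (1 - up_Fhat s i m (2^k)) = S2 i m (2^k) \<omega> / real m"
        unfolding up_Uhat_def up_Fhat_def S2_def s_def by (rule sum_ident[OF m])
      have g1: "\<bar>up_Uhat u s i m (2^k) - mu1 i (2^k)\<bar> \<le> (1 - u (2^k)) * up_alpha n \<delta> m (2^k)"
        using c1 unfolding e1 al_def by simp
      have g2: "\<bar>up_Uhat u s i m (2^k) - u (2^k) * (1 - up_Fhat s i m (2^k)) - mu2 i (2^k)\<bar> < up_alpha n \<delta> m (2^k)"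
        using c2 unfolding e2[symmetric] al_def by simp
      show ?thesis using g1 g2 by blast
    qed
    have loc: "UPdet n \<delta> u sel s (\<lambda>i. exp_util u (D i)) (\<lambda>i. run_cdf (D i)) mu1 mu2 iopt"
      apply (rule UPdet.intro)
      subgoal using u_range by auto
      subgoal by (rule u_lim)
      subgoal by (rule n)
      subgoal by (rule \<delta>(1))
      subgoal by (rule \<delta>(2))
      subgoal by (rule iopt(1))
      subgoal using iopt(2) by auto
      subgoal using sel by blast
      subgoal for i \<kappa> using mu_facts(4)[OF Dfacts u_range u_antimono] by (simp add: run_cdf_def)
      subgoal for i \<kappa> using mu_facts(1-3)[OF Dfacts[of i] u_range u_antimono, of \<kappa>]
        by (simp add: exp_util_def mu1_def mu2_def run_cdf_def)
      subgoal for i m k using good by blast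
      done
    show "let s = (\<lambda>i m j. T i m j \<omega>);
        U = (\<lambda>i. exp_util u (D i));
        F = (\<lambda>i. run_cdf (D i));
        ex = up_executed n \<delta> u sel s;
        I = (\<lambda>m. fst (up_state n \<delta> u sel s m));
        cap = up_cap n \<delta> u sel s;
        ret = up_return n \<delta> u sel s;
        \<alpha> = up_alpha n \<delta>
    in
    ((\<exists>M0. \<forall>m\<ge>M0. ex m \<longrightarrow> U (ret m) = U iopt)
     \<and> (\<forall>m. ex m \<and> card (I m) = 1 \<longrightarrow> U (ret m) = U iopt)
     \<and> ((\<forall>i<n. i \<noteq> iopt \<longrightarrow> U i < U iopt) \<longrightarrow> (\<exists>m. ex m \<and> I m = {iopt})))
    \<and> (\<forall>\<epsilon>::real. \<forall>m. ex m \<longrightarrow>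
         2 * \<alpha> m (cap m iopt) + u (cap m iopt) * (1 - F iopt (cap m iopt)) \<le> \<epsilon> \<longrightarrow>
         U (ret m) \<ge> U iopt - \<epsilon>)
    \<and> (\<forall>i<n. U i < U iopt \<longrightarrow> (\<forall>m. ex m \<longrightarrow>
         2 * \<alpha> m (cap m i) + 2 * \<alpha> m (cap m iopt)
           + u (cap m i) * (1 - F i (cap m i)) + u (cap m iopt) * (1 - F iopt (cap m iopt))
           \<le> U iopt - U i \<longrightarrow> i \<notin> I m))"
      unfolding Let_def s_def[symmetric] using UPdet.det_main[OF loc] by simp
  qed
qed

end
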